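(* Let $\varepsilon>0$, $0<\kappa<1$, $M\ge0$, and let $\{a_n\}_{n=1}^\infty$, $\{b_n\}_{n=1}^\infty$ be sequences of positive integers with $\{a_n\}$ non-decreasing, $\limsup_{n\to\infty}a_n^{(M+2)^{-n}}=\infty$, and $a_n\ge n^{1+\varepsilon}$, $b_n\le 2^{(\log_2 a_n)^\kappa}$ for all sufficiently large $n$. Let $k$ be a positive integer. Then for infinitely many $N>k$, \[a_N>\Big(1+\frac1{N^2}\Big)^{(M+2)^N}\Big(\max_{k\le n<N}a_n^{(M+2)^{-n}}\Big)^{(M+2)^N},\] and for every such $N$ we further have \[a_N>\Big(1+\frac1{N^2}\Big)^{(M+2)^N}\prod_{n=k}^{N-1}a_n^{M+1}.\] *)

theory Defs
  imports "HOL-Analysis.Analysis"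
begin

end

theory Submission
  imports Defs
begin

lemma geom_aux:
  fixes c :: real
  shows "k \<le> N \<Longrightarrow> (c - 1) * (\<Sum>n=k..<N. c ^ n) = c ^ N - c ^ k"
proof (induction N rule: nat_induct_at_least)
  case base then show ?case by simp
next
  case (Suc n)
  then show ?case by (simp add: sum.atLeastLessThan_Suc algebra_simps)
qed


lemma ratio_aux2:
  fixes N :: nat assumes "N \<ge> 2"
  shows "(1 + 1 / real N ^ 2) * ((real N - 1) / real N) \<le> (real (Suc N) - 1) / real (Suc N)"
proof -
  have N: "real N \<ge> 2" using assms by simp
  have "(1 + 1 / real N ^ 2) * ((real N - 1) / real N) = (real N ^ 2 + 1) * (real N - 1) / real N ^ 3"
    using N by (simp add: field_simps power2_eq_square power3_eq_cube)
  also have "\<dots> \<le> real N / (real N + 1)"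
  proof -
    have "(real N ^ 2 + 1) * (real N - 1) * (real N + 1) \<le> real N * real N ^ 3"
      by (simp add: algebra_simps power2_eq_square power3_eq_cube power4_eq_xxxx)
    then show ?thesis using N by (simp add: divide_simps)
  qed
  finally show ?thesis by (simp add: add.commute)
qed

theorem corollary1:
  fixes \<epsilon> \<kappa> M :: real and a b :: "nat \<Rightarrow> nat" and k :: nat
  assumes "\<epsilon> > 0" and "0 < \<kappa>" and "\<kappa> < 1" and "M \<ge> 0"
    and "\<And>n. n \<ge> 1 \<Longrightarrow> a n > 0"
    and "\<And>n. n \<ge> 1 \<Longrightarrow> b n > 0"
    and "\<And>m n. 1 \<le> m \<Longrightarrow> m \<le> n \<Longrightarrow> a m \<le> a n"
    and "limsup (\<lambda>n. ereal (real (a n) powr ((M + 2) powr (- real n)))) = \<infinity>"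
    and "\<forall>\<^sub>F n in sequentially. real (a n) \<ge> real n powr (1 + \<epsilon>)"
    and "\<forall>\<^sub>F n in sequentially. real (b n) \<le> 2 powr ((log 2 (real (a n))) powr \<kappa>)"
    and "k \<ge> 1"
  shows "infinite {N. N > k \<and>
            real (a N) > (1 + 1 / real N ^ 2) powr ((M + 2) ^ N) *
              (Max ((\<lambda>n. real (a n) powr ((M + 2) powr (- real n))) ` {k..<N})) powr ((M + 2) ^ N)}
       \<and> (\<forall>N. N > k \<and>
            real (a N) > (1 + 1 / real N ^ 2) powr ((M + 2) ^ N) *
              (Max ((\<lambda>n. real (a n) powr ((M + 2) powr (- real n))) ` {k..<N})) powr ((M + 2) ^ N)
          \<longrightarrow> real (a N) > (1 + 1 / real N ^ 2) powr ((M + 2) ^ N) *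
              (\<Prod>n=k..<N. real (a n) powr (M + 1)))"
proof -
  define c where "c = M + 2"
  have c2: "c \<ge> 2" using assms(4) by (simp add: c_def)
  define x where "x n = real (a n) powr (c powr (- real n))" for n
  define m where "m N = Max (x ` {k..<N})" for N
  have e: "c powr (- real n) = 1 / c ^ n" for n
    using c2 by (simp add: powr_minus powr_realpow divide_inverse)
  have a1: "real (a n) \<ge> 1" if "n \<ge> 1" for n using assms(5)[OF that] by simp
  have x1: "x n \<ge> 1" if "n \<ge> 1" for n
    unfolding x_def using a1[OF that] c2 by (intro ge_one_powr_ge_zero) auto
  have xa: "x n powr (c ^ n) = real (a n)" if "n \<ge> 1" for n
  proof -
    have "x n powr (c ^ n) = real (a n) powr (c powr (- real n) * c ^ n)"
      unfolding x_def by (simp add: powr_powr)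
    also have "c powr (- real n) * c ^ n = 1" using c2 by (simp add: e)
    finally show ?thesis using a1[OF that] by simp
  qed
  have mge: "x n \<le> m N" if "k \<le> n" "n < N" for n N
    unfolding m_def using that by (intro Max_ge) auto
  have m1: "m N \<ge> 1" if "k < N" for N
    using mge[of k N] x1[of k] that assms(11) by auto
  have mSuc: "m (Suc N) = max (x N) (m N)" if "k < N" for N
  proof -
    have "{k..<Suc N} = insert N {k..<N}" using that by auto
    then show ?thesis unfolding m_def using that by (simp add: Max_insert)
  qed
  let ?P = "\<lambda>N. N > k \<and> real (a N) > (1 + 1 / real N ^ 2) powr (c ^ N) * (m N) powr (c ^ N)"
  have part2: "real (a N) > (1 + 1 / real N ^ 2) powr (c ^ N) * (\<Prod>n=k..<N. real (a n) powr (M + 1))"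
    if P: "?P N" for N
  proof -
    have kN: "k < N" using P by simp
    have "(\<Prod>n=k..<N. real (a n) powr (M + 1)) \<le> (\<Prod>n=k..<N. m N powr ((M + 1) * c ^ n))"
    proof (rule prod_mono, rule conjI)
      fix n assume n: "n \<in> {k..<N}"
      then have n1: "n \<ge> 1" using assms(11) by simp
      show "0 \<le> real (a n) powr (M + 1)" by simp
      have "real (a n) powr (M + 1) = x n powr ((M + 1) * c ^ n)"
        using xa[OF n1] by (metis mult.commute powr_powr)
      also have "\<dots> \<le> m N powr ((M + 1) * c ^ n)"
        using n x1[OF n1] mge[of n N] assms(4) c2 by (intro powr_mono2) auto
      finally show "real (a n) powr (M + 1) \<le> m N powr ((M + 1) * c ^ n)" .
    qed
    also have "\<dots> = m N powr (\<Sum>n=k..<N. (M + 1) * c ^ n)"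
      using m1[OF kN] by (simp add: powr_sum)
    also have "(\<Sum>n=k..<N. (M + 1) * c ^ n) = c ^ N - c ^ k"
      using geom_aux[of k N c] kN by (simp add: c_def sum_distrib_left[symmetric] sum.distrib algebra_simps)
    also have "m N powr (c ^ N - c ^ k) \<le> m N powr (c ^ N)"
      using m1[OF kN] c2 by (intro powr_mono) auto
    finally have le: "(\<Prod>n=k..<N. real (a n) powr (M + 1)) \<le> m N powr (c ^ N)" .
    have "(1 + 1 / real N ^ 2) powr (c ^ N) * (\<Prod>n=k..<N. real (a n) powr (M + 1))
        \<le> (1 + 1 / real N ^ 2) powr (c ^ N) * m N powr (c ^ N)"
      using le by (intro mult_left_mono) auto
    then show ?thesis using P by linarith
  qed
  have part1: "infinite {N. ?P N}"
  proof
    assume fin: "finite {N. ?P N}"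
    obtain N0 where N0: "N0 > k + 1" "\<And>N. N \<ge> N0 \<Longrightarrow> \<not> ?P N"
    proof -
      obtain B where "\<forall>N\<in>{N. ?P N}. N \<le> B" using fin finite_nat_set_iff_bounded_le by blast
      then have B: "\<And>N. ?P N \<Longrightarrow> N \<le> B" by blast
      show ?thesis
      proof (rule that[of "B + k + 2"])
        show "B + k + 2 > k + 1" by simp
        fix N assume "N \<ge> B + k + 2"
        then show "\<not> ?P N" using B[of N] by linarith
      qed
    qed
    have step: "x N \<le> (1 + 1 / real N ^ 2) * m N" if "N \<ge> N0" for N
    proof -
      have kN: "k < N" using that N0 by simp
      have N1: "N \<ge> 1" using kN assms(11) by simp
      have pos: "0 \<le> (1 + 1 / real N ^ 2) * m N" using m1[OF kN] by simp
      have "real (a N) \<le> (1 + 1 / real N ^ 2) powr (c ^ N) * (m N) powr (c ^ N)"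
        using N0(2)[OF that] kN by simp
      also have "\<dots> = ((1 + 1 / real N ^ 2) * m N) powr (c ^ N)"
        by (simp add: powr_mult)
      finally have "real (a N) \<le> ((1 + 1 / real N ^ 2) * m N) powr (c ^ N)" .
      then have "x N \<le> (((1 + 1 / real N ^ 2) * m N) powr (c ^ N)) powr (c powr (- real N))"
        unfolding x_def by (intro powr_mono2) auto
      also have "\<dots> = (1 + 1 / real N ^ 2) * m N"
        using pos c2 by (simp add: powr_powr e)
      finally show ?thesis .
    qed
    define K where "K = m N0 * real N0 / (real N0 - 1)"
    have inv: "m N \<le> K * ((real N - 1) / real N)" if "N \<ge> N0" for N
      using that
    proof (induction N rule: nat_induct_at_least)
      case base
      then show ?case using N0 by (simp add: K_def field_simps)
    next
      case (Suc N)
      have kN: "k < N" using Suc N0 by simp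
      have N2: "N \<ge> 2" using Suc N0 assms(11) by simp
      have "m (Suc N) = max (x N) (m N)" using mSuc[OF kN] .
      also have "\<dots> \<le> (1 + 1 / real N ^ 2) * m N"
        using step[OF Suc(1)] m1[OF kN] by (auto simp: max_def)
      also have "\<dots> \<le> (1 + 1 / real N ^ 2) * (K * ((real N - 1) / real N))"
        using Suc(2) by (intro mult_left_mono) auto
      also have "\<dots> = K * ((1 + 1 / real N ^ 2) * ((real N - 1) / real N))" by simp
      also have "\<dots> \<le> K * ((real (Suc N) - 1) / real (Suc N))"
      proof (rule mult_left_mono)
        show "(1 + 1 / real N ^ 2) * ((real N - 1) / real N) \<le> (real (Suc N) - 1) / real (Suc N)"
          using ratio_aux2[OF N2] .
        show "0 \<le> K" unfolding K_def using m1[of N0] N0 by auto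
      qed
      finally show ?case .
    qed
    have bnd: "x N \<le> K" if "N \<ge> N0" for N
    proof -
      have kN: "k < N" using that N0 by simp
      have "x N \<le> m (Suc N)" using mSuc[OF kN] by simp
      also have "\<dots> \<le> K * ((real (Suc N) - 1) / real (Suc N))" using inv[of "Suc N"] that by simp
      also have "\<dots> \<le> K" 
      proof -
        have "0 \<le> K" unfolding K_def using m1[of N0] N0 by auto
        moreover have "(real (Suc N) - 1) / real (Suc N) \<le> 1" by simp
        ultimately show ?thesis using mult_left_le by blast
      qed
      finally show ?thesis .
    qed
    have "limsup (\<lambda>n. ereal (x n)) \<le> ereal K"
      by (rule Limsup_bounded) (use bnd in \<open>auto simp: eventually_sequentially\<close>)
    then show False using assms(8) unfolding x_def c_def by simp
  qed
  show ?thesis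
    using part1 part2 unfolding m_def x_def c_def by simp
qed

end
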